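(* Let $\eta\in C^2(\mathbb T^N,(0,\infty))$, $0\le a\le b$, $L\ge0$, $i\in[1,N]$ and $k\ne i$. The measure with density $\eta$ belongs to $\mathcal M^{(i,k)}_{a,b,L}$ if and only if (i) $\eta(\cdot;\hat{\boldsymbol x}_i)\in\mathcal V_a$ for all $\hat{\boldsymbol x}_i\in\mathbb T^{N-1}$, and (ii) $A^{(i,k)}_{\eta,b}(\hat{\boldsymbol x}_i)-B^{(i,k)}_{\eta,b}(\hat{\boldsymbol x}_i)\le L$ for every $\hat{\boldsymbol x}_i\in\mathbb T^{N-1}$, where $$A^{(i,k)}_{\eta,b}(\hat{\boldsymbol x}_i):=\sup_{x\in\mathbb T}\max\Big\{\frac{\partial_k\eta}{\eta},\ \frac{b\partial_k\eta-\partial_k\partial_i\eta}{b\eta-\partial_i\eta},\ \frac{b\partial_k\eta+\partial_k\partial_i\eta}{b\eta+\partial_i\eta}\Big\}(x;\hat{\boldsymbol x}_i),$$ and $B^{(i,k)}_{\eta,b}(\hat{\boldsymbol x}_i)$ is defined by the same expression with $\sup_x\max$ replaced by $\inf_x\min$.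
   Context: $\mathbb T=\mathbb R/\mathbb Z$ with torus distance; $\boldsymbol x=(x_i;\hat{\boldsymbol x}_i)$ with $\hat{\boldsymbol x}_i\in\mathbb T^{N-1}$ the remaining coordinates. $\mathcal V_a:=\{\psi\in C^2(\mathbb T,(0,\infty)):|\frac d{dx}\log\psi|<a\}$; $\beta_a(\psi_1,\psi_2):=\inf\{t>0:t\psi_1-\psi_2\in\mathcal V_a\}$, $\theta_a(\psi_1,\psi_2):=\log\beta_a(\psi_1,\psi_2)+\log\beta_a(\psi_2,\psi_1)$. For a measure with density $\rho\in C^2(\mathbb T^N,(0,\infty))$, $\rho_{\hat{\boldsymbol x}_i}(x):=\rho(x;\hat{\boldsymbol x}_i)/\int\rho(s;\hat{\boldsymbol x}_i)ds$; it belongs to $\mathcal M^{(i,k)}_{a,b,L}$ iff $\rho_{\hat{\boldsymbol x}_i}\in\mathcal V_a$ for all $\hat{\boldsymbol x}_i$ and $\theta_b(\rho_{\hat{\boldsymbol x}_i},\rho_{\hat{\boldsymbol x}'_i})\le L|x_k-x'_k|$ whenever $\hat{\boldsymbol x}_i,\hat{\boldsymbol x}'_i$ differ only in their $k$-th coordinates $x_k,x'_k$. *)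

theory Defs
  imports "HOL-Analysis.Analysis"
begin

text \<open>The torus T = R/Z is represented by 1-periodic functions on R; T^N by functions on
  real^'n that are 1-periodic in every coordinate.\<close>

definition torus_dist :: "real \<Rightarrow> real \<Rightarrow> real" where
  "torus_dist u v = \<bar>(u - v) - of_int (round (u - v))\<bar>"

text \<open>Replace the j-th coordinate of x by t: the point (t; x-hat_j).\<close>
definition upd :: "real^'n \<Rightarrow> 'n \<Rightarrow> real \<Rightarrow> real^'n" where
  "upd x j t = (\<chi> l. if l = j then t else x $ l)"

definition sect :: "(real^'n \<Rightarrow> real) \<Rightarrow> real^'n \<Rightarrow> 'n \<Rightarrow> real \<Rightarrow> real" where
  "sect f x j = (\<lambda>t. f (upd x j t))"

definition partial :: "'n \<Rightarrow> (real^'n \<Rightarrow> real) \<Rightarrow> real^'n \<Rightarrow> real" where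
  "partial j f x = deriv (sect f x j) (x $ j)"

definition periodic1 :: "(real \<Rightarrow> real) \<Rightarrow> bool" where
  "periodic1 \<psi> \<longleftrightarrow> (\<forall>x. \<psi> (x + 1) = \<psi> x)"

definition periodicN :: "(real^'n \<Rightarrow> real) \<Rightarrow> bool" where
  "periodicN f \<longleftrightarrow> (\<forall>x j. f (upd x j (x $ j + 1)) = f x)"

definition C2_1 :: "(real \<Rightarrow> real) \<Rightarrow> bool" where
  "C2_1 \<psi> \<longleftrightarrow> (\<forall>x. \<psi> differentiable at x) \<and> (\<forall>x. deriv \<psi> differentiable at x)
     \<and> continuous_on UNIV (deriv (deriv \<psi>))"

definition C2_N :: "(real^'n \<Rightarrow> real) \<Rightarrow> bool" where
  "C2_N f \<longleftrightarrow> continuous_on UNIV f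
     \<and> (\<forall>j x. sect f x j differentiable at (x $ j))
     \<and> (\<forall>j. continuous_on UNIV (partial j f))
     \<and> (\<forall>j l x. sect (partial j f) x l differentiable at (x $ l))
     \<and> (\<forall>j l. continuous_on UNIV (partial l (partial j f)))"

definition C2_T_pos :: "(real \<Rightarrow> real) \<Rightarrow> bool" where
  "C2_T_pos \<psi> \<longleftrightarrow> periodic1 \<psi> \<and> C2_1 \<psi> \<and> (\<forall>x. \<psi> x > 0)"

definition C2_TN_pos :: "(real^'n \<Rightarrow> real) \<Rightarrow> bool" where
  "C2_TN_pos f \<longleftrightarrow> periodicN f \<and> C2_N f \<and> (\<forall>x. f x > 0)"

definition V :: "real \<Rightarrow> (real \<Rightarrow> real) set" where
  "V a = {\<psi>. C2_T_pos \<psi> \<and> (\<forall>x. \<bar>deriv (\<lambda>y. ln (\<psi> y)) x\<bar> < a)}"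

text \<open>beta_a, with the convention inf {} = +infinity.\<close>
definition beta :: "real \<Rightarrow> (real \<Rightarrow> real) \<Rightarrow> (real \<Rightarrow> real) \<Rightarrow> ereal" where
  "beta a \<psi>1 \<psi>2 = Inf (ereal ` {t. t > 0 \<and> (\<lambda>x. t * \<psi>1 x - \<psi>2 x) \<in> V a})"

definition theta :: "real \<Rightarrow> (real \<Rightarrow> real) \<Rightarrow> (real \<Rightarrow> real) \<Rightarrow> ereal" where
  "theta a \<psi>1 \<psi>2 =
     (if beta a \<psi>1 \<psi>2 = \<infinity> \<or> beta a \<psi>2 \<psi>1 = \<infinity> then \<infinity>
      else ereal (ln (real_of_ereal (beta a \<psi>1 \<psi>2)) + ln (real_of_ereal (beta a \<psi>2 \<psi>1))))"

text \<open>Normalized conditional density rho_{x-hat_i}; the i-th coordinate of y is ignored.\<close>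
definition cond_density :: "(real^'n \<Rightarrow> real) \<Rightarrow> 'n \<Rightarrow> real^'n \<Rightarrow> real \<Rightarrow> real" where
  "cond_density \<rho> i y = (\<lambda>x. \<rho> (upd y i x) / integral {0..1} (\<lambda>s. \<rho> (upd y i s)))"

definition in_M :: "'n \<Rightarrow> 'n \<Rightarrow> real \<Rightarrow> real \<Rightarrow> real \<Rightarrow> (real^'n \<Rightarrow> real) \<Rightarrow> bool" where
  "in_M i k a b L \<rho> \<longleftrightarrow> C2_TN_pos \<rho>
     \<and> (\<forall>y. cond_density \<rho> i y \<in> V a)
     \<and> (\<forall>y t. theta b (cond_density \<rho> i y) (cond_density \<rho> i (upd y k t))
                \<le> ereal (L * torus_dist (y $ k) t))"

definition ratios :: "'n \<Rightarrow> 'n \<Rightarrow> real \<Rightarrow> (real^'n \<Rightarrow> real) \<Rightarrow> real^'n \<Rightarrow> real list" where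
  "ratios i k b \<eta> p =
     [partial k \<eta> p / \<eta> p,
      (b * partial k \<eta> p - partial k (partial i \<eta>) p) / (b * \<eta> p - partial i \<eta> p),
      (b * partial k \<eta> p + partial k (partial i \<eta>) p) / (b * \<eta> p + partial i \<eta> p)]"

definition A_fun :: "'n \<Rightarrow> 'n \<Rightarrow> (real^'n \<Rightarrow> real) \<Rightarrow> real \<Rightarrow> real^'n \<Rightarrow> real" where
  "A_fun i k \<eta> b y = (SUP x\<in>UNIV. Max (set (ratios i k b \<eta> (upd y i x))))"

definition B_fun :: "'n \<Rightarrow> 'n \<Rightarrow> (real^'n \<Rightarrow> real) \<Rightarrow> real \<Rightarrow> real^'n \<Rightarrow> real" where
  "B_fun i k \<eta> b y = (INF x\<in>UNIV. Min (set (ratios i k b \<eta> (upd y i x))))"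

end

theory Submission
  imports Defs
begin


lemma upd_same[simp]: "(upd x j t) $ j = t" by (simp add: upd_def)
lemma upd_other[simp]: "l \<noteq> j \<Longrightarrow> (upd x j t) $ l = x $ l" by (simp add: upd_def)
lemma upd_upd_same[simp]: "upd (upd x j s) j t = upd x j t" by (simp add: upd_def vec_eq_iff)
lemma upd_commute: "j \<noteq> l \<Longrightarrow> upd (upd x j s) l t = upd (upd x l t) j s"
  by (simp add: upd_def vec_eq_iff)
lemma upd_triv[simp]: "upd x j (x $ j) = x" by (simp add: upd_def vec_eq_iff)
lemma sect_upd_same[simp]: "sect f (upd x j s) j = sect f x j" by (simp add: sect_def)

lemma continuous_upd: "continuous_on UNIV (\<lambda>s::real. upd y j s)"
  unfolding upd_def
  apply (intro continuous_on_vec_lambda)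
  subgoal for l by (cases "l = j") (auto intro: continuous_on_const continuous_on_id)
  done

lemma deriv_ln_eq:
  fixes \<phi> :: "real \<Rightarrow> real"
  assumes "\<phi> differentiable at x" "\<phi> x > 0"
  shows "deriv (\<lambda>y. ln (\<phi> y)) x = deriv \<phi> x / \<phi> x"
proof -
  have "DERIV \<phi> x :> deriv \<phi> x" using assms DERIV_deriv_iff_real_differentiable by blast
  from DERIV_chain2[OF DERIV_ln[OF assms(2)] this]
  have "DERIV (\<lambda>y. ln (\<phi> y)) x :> inverse (\<phi> x) * deriv \<phi> x" .
  then show ?thesis by (simp add: DERIV_imp_deriv field_simps)
qed

lemma lin_deriv:
  fixes f g :: "real \<Rightarrow> real"
  assumes "\<forall>x. f differentiable at x" "\<forall>x. g differentiable at x"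
  shows "deriv (\<lambda>x. s * f x + t * g x) = (\<lambda>x. s * deriv f x + t * deriv g x)"
    and "\<forall>x. (\<lambda>x. s * f x + t * g x) differentiable at x"
proof -
  have d: "DERIV (\<lambda>x. s * f x + t * g x) x :> s * deriv f x + t * deriv g x" for x
  proof -
    have "DERIV f x :> deriv f x" "DERIV g x :> deriv g x"
      using assms DERIV_deriv_iff_real_differentiable by blast+
    from DERIV_add[OF DERIV_cmult[OF this(1)] DERIV_cmult[OF this(2)]] show ?thesis by simp
  qed
  show "deriv (\<lambda>x. s * f x + t * g x) = (\<lambda>x. s * deriv f x + t * deriv g x)"
    using d DERIV_imp_deriv by blast
  show "\<forall>x. (\<lambda>x. s * f x + t * g x) differentiable at x"
    using d real_differentiable_def by blast
qed

lemma C2_lin: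
  assumes "C2_1 f" "C2_1 g"
  shows "C2_1 (\<lambda>x. s * f x + t * g x)"
    and "deriv (\<lambda>x. s * f x + t * g x) = (\<lambda>x. s * deriv f x + t * deriv g x)"
proof -
  have f1: "\<forall>x. f differentiable at x" "\<forall>x. deriv f differentiable at x"
    and f2: "continuous_on UNIV (deriv (deriv f))"
    using assms(1) unfolding C2_1_def by auto
  have g1: "\<forall>x. g differentiable at x" "\<forall>x. deriv g differentiable at x"
    and g2: "continuous_on UNIV (deriv (deriv g))"
    using assms(2) unfolding C2_1_def by auto
  show e: "deriv (\<lambda>x. s * f x + t * g x) = (\<lambda>x. s * deriv f x + t * deriv g x)"
    using lin_deriv f1 g1 by blast
  have e2: "deriv (\<lambda>x. s * deriv f x + t * deriv g x) = (\<lambda>x. s * deriv (deriv f) x + t * deriv (deriv g) x)"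
    using lin_deriv f1 g1 by blast
  show "C2_1 (\<lambda>x. s * f x + t * g x)"
    unfolding C2_1_def e e2
    using lin_deriv(2)[OF f1(1) g1(1)] lin_deriv(2)[OF f1(2) g1(2)] f2 g2
    by (auto intro!: continuous_intros)
qed

lemma V_iff: "\<psi> \<in> V b \<longleftrightarrow> C2_T_pos \<psi> \<and> (\<forall>x. \<bar>deriv \<psi> x\<bar> < b * \<psi> x)"
proof -
  have "\<bar>deriv (\<lambda>y. ln (\<psi> y)) x\<bar> < b \<longleftrightarrow> \<bar>deriv \<psi> x\<bar> < b * \<psi> x" if "C2_T_pos \<psi>" for x
  proof -
    have p: "\<psi> x > 0" "\<psi> differentiable at x" using that unfolding C2_T_pos_def C2_1_def by auto
    show ?thesis using p by (simp add: deriv_ln_eq abs_divide pos_divide_less_eq)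
  qed
  then show ?thesis unfolding V_def by auto
qed

lemma V_mono: "a \<le> b \<Longrightarrow> \<psi> \<in> V a \<Longrightarrow> \<psi> \<in> V b"
  unfolding V_def using less_le_trans by blast

lemma V_scale:
  assumes "\<psi> \<in> V a" "c > 0"
  shows "(\<lambda>x. c * \<psi> x) \<in> V a"
proof -
  have C: "C2_T_pos \<psi>" and h: "\<forall>x. \<bar>deriv \<psi> x\<bar> < a * \<psi> x" using assms V_iff by auto
  have c2: "C2_1 \<psi>" using C unfolding C2_T_pos_def by auto
  have "C2_1 (\<lambda>x. c * \<psi> x)" using C2_lin(1)[OF c2 c2, of c 0] by simp
  moreover have "deriv (\<lambda>x. c * \<psi> x) = (\<lambda>x. c * deriv \<psi> x)" using C2_lin(2)[OF c2 c2, of c 0] by simp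
  moreover have "periodic1 (\<lambda>x. c * \<psi> x)" using C unfolding C2_T_pos_def periodic1_def by auto
  moreover have "\<forall>x. c * \<psi> x > 0" using C assms(2) unfolding C2_T_pos_def by auto
  moreover have "\<bar>c * deriv \<psi> x\<bar> < a * (c * \<psi> x)" for x
  proof -
    have "\<bar>c * deriv \<psi> x\<bar> = c * \<bar>deriv \<psi> x\<bar>" using assms(2) by (simp add: abs_mult)
    also have "\<dots> < c * (a * \<psi> x)" using h assms(2) by auto
    finally show ?thesis by (simp add: algebra_simps)
  qed
  ultimately show ?thesis unfolding V_iff C2_T_pos_def by auto
qed

definition Qf :: "real \<Rightarrow> (real \<Rightarrow> real) \<Rightarrow> nat \<Rightarrow> real \<Rightarrow> real" where
  "Qf b \<psi> j x = (if j = 0 then \<psi> x else if j = 1 then b * \<psi> x - deriv \<psi> x else b * \<psi> x + deriv \<psi> x)"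

lemma Q_pos: "\<psi> \<in> V b \<Longrightarrow> Qf b \<psi> j x > 0"
  unfolding V_iff Qf_def C2_T_pos_def by (smt (verit))

lemma comb_V:
  assumes "\<psi>1 \<in> V b" "\<psi>2 \<in> V b"
  shows "(\<lambda>x. t * \<psi>1 x - \<psi>2 x) \<in> V b \<longleftrightarrow> (\<forall>x j. j < 3 \<longrightarrow> Qf b \<psi>2 j x < t * Qf b \<psi>1 j x)"
proof -
  have C1: "C2_T_pos \<psi>1" and C2: "C2_T_pos \<psi>2" using assms V_iff by auto
  have c1: "C2_1 \<psi>1" and c2: "C2_1 \<psi>2" and p1: "periodic1 \<psi>1" and p2: "periodic1 \<psi>2"
    using C1 C2 unfolding C2_T_pos_def by auto
  have eq: "(\<lambda>x. t * \<psi>1 x - \<psi>2 x) = (\<lambda>x. t * \<psi>1 x + (-1) * \<psi>2 x)" by (simp add: fun_eq_iff)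
  have cc: "C2_1 (\<lambda>x. t * \<psi>1 x - \<psi>2 x)" using C2_lin(1)[OF c1 c2, of t "-1"] by simp
  have dd: "deriv (\<lambda>x. t * \<psi>1 x - \<psi>2 x) = (\<lambda>x. t * deriv \<psi>1 x - deriv \<psi>2 x)"
    using C2_lin(2)[OF c1 c2, of t "-1"] by simp
  have pp: "periodic1 (\<lambda>x. t * \<psi>1 x - \<psi>2 x)" using p1 p2 unfolding periodic1_def by auto
  have "(\<lambda>x. t * \<psi>1 x - \<psi>2 x) \<in> V b \<longleftrightarrow>
     (\<forall>x. t * \<psi>1 x - \<psi>2 x > 0 \<and> \<bar>t * deriv \<psi>1 x - deriv \<psi>2 x\<bar> < b * (t * \<psi>1 x - \<psi>2 x))"
    unfolding V_iff C2_T_pos_def using cc dd pp by auto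
  also have "\<dots> \<longleftrightarrow> (\<forall>x j. j < 3 \<longrightarrow> Qf b \<psi>2 j x < t * Qf b \<psi>1 j x)"
  proof
    assume h: "\<forall>x. t * \<psi>1 x - \<psi>2 x > 0 \<and> \<bar>t * deriv \<psi>1 x - deriv \<psi>2 x\<bar> < b * (t * \<psi>1 x - \<psi>2 x)"
    show "\<forall>x j. j < 3 \<longrightarrow> Qf b \<psi>2 j x < t * Qf b \<psi>1 j x"
    proof (intro allI impI)
      fix x j assume "j < (3::nat)"
      then have "j = 0 \<or> j = 1 \<or> j = 2" by auto
      then show "Qf b \<psi>2 j x < t * Qf b \<psi>1 j x" using h[rule_format, of x] unfolding Qf_def
        by (auto simp: algebra_simps abs_less_iff)
    qed
  next
    assume h: "\<forall>x j. j < 3 \<longrightarrow> Qf b \<psi>2 j x < t * Qf b \<psi>1 j x"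
    show "\<forall>x. t * \<psi>1 x - \<psi>2 x > 0 \<and> \<bar>t * deriv \<psi>1 x - deriv \<psi>2 x\<bar> < b * (t * \<psi>1 x - \<psi>2 x)"
    proof
      fix x
      have "Qf b \<psi>2 0 x < t * Qf b \<psi>1 0 x" "Qf b \<psi>2 1 x < t * Qf b \<psi>1 1 x" "Qf b \<psi>2 2 x < t * Qf b \<psi>1 2 x"
        using h by auto
      then show "t * \<psi>1 x - \<psi>2 x > 0 \<and> \<bar>t * deriv \<psi>1 x - deriv \<psi>2 x\<bar> < b * (t * \<psi>1 x - \<psi>2 x)"
        unfolding Qf_def by (auto simp: algebra_simps abs_less_iff)
    qed
  qed
  finally show ?thesis .
qed

lemma beta_lower:
  assumes "\<psi>1 \<in> V b" "\<psi>2 \<in> V b" "j < 3"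
  shows "ereal (Qf b \<psi>2 j x / Qf b \<psi>1 j x) \<le> beta b \<psi>1 \<psi>2"
  unfolding beta_def
proof (rule Inf_greatest)
  fix e assume "e \<in> ereal ` {t. t > 0 \<and> (\<lambda>x. t * \<psi>1 x - \<psi>2 x) \<in> V b}"
  then obtain t where e: "e = ereal t" and t: "(\<lambda>x. t * \<psi>1 x - \<psi>2 x) \<in> V b" by auto
  have "Qf b \<psi>2 j x < t * Qf b \<psi>1 j x" using t comb_V[OF assms(1,2)] assms(3) by auto
  then have "Qf b \<psi>2 j x / Qf b \<psi>1 j x < t" using Q_pos[OF assms(1)] by (simp add: pos_divide_less_eq)
  then show "ereal (Qf b \<psi>2 j x / Qf b \<psi>1 j x) \<le> e" using e by simp
qed

lemma beta_upper:
  assumes "\<psi>1 \<in> V b" "\<psi>2 \<in> V b" "\<forall>x j. j < 3 \<longrightarrow> Qf b \<psi>2 j x / Qf b \<psi>1 j x \<le> M"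
  shows "beta b \<psi>1 \<psi>2 \<le> ereal M"
proof (rule dense_ge)
  fix z assume z: "ereal M < z"
  have M0: "M > 0" using assms(3)[rule_format, of 0 0] Q_pos[OF assms(1)] Q_pos[OF assms(2)]
    by (smt (verit) divide_pos_pos zero_less_numeral)
  show "beta b \<psi>1 \<psi>2 \<le> z"
  proof (cases z)
    case (real t)
    then have tM: "t > M" using z by simp
    have "\<forall>x j. j < 3 \<longrightarrow> Qf b \<psi>2 j x < t * Qf b \<psi>1 j x"
    proof (intro allI impI)
      fix x j assume "j < (3::nat)"
      then have "Qf b \<psi>2 j x / Qf b \<psi>1 j x \<le> M" using assms(3) by blast
      then have "Qf b \<psi>2 j x / Qf b \<psi>1 j x < t" using tM by linarith
      then show "Qf b \<psi>2 j x < t * Qf b \<psi>1 j x" using Q_pos[OF assms(1)] by (simp add: pos_divide_less_eq)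
    qed
    then have "t \<in> {t. t > 0 \<and> (\<lambda>x. t * \<psi>1 x - \<psi>2 x) \<in> V b}"
      using comb_V[OF assms(1,2)] tM M0 by auto
    then show ?thesis unfolding beta_def real by (intro Inf_lower) auto
  next
    case PInf then show ?thesis by simp
  next
    case MInf then show ?thesis using z by simp
  qed
qed

lemma theta_le:
  assumes V1: "\<psi>1 \<in> V b" and V2: "\<psi>2 \<in> V b" and E: "E > 0"
    and H: "\<forall>x1 x2 j m. j < 3 \<longrightarrow> m < 3 \<longrightarrow>
       (Qf b \<psi>2 j x1 / Qf b \<psi>1 j x1) * (Qf b \<psi>1 m x2 / Qf b \<psi>2 m x2) \<le> E"
  shows "theta b \<psi>1 \<psi>2 \<le> ereal (ln E)"
proof -
  define r12 where "r12 j x = Qf b \<psi>2 j x / Qf b \<psi>1 j x" for j x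
  define r21 where "r21 j x = Qf b \<psi>1 j x / Qf b \<psi>2 j x" for j x
  have r12p: "r12 j x > 0" for j x unfolding r12_def using Q_pos[OF V1] Q_pos[OF V2] by simp
  have r21p: "r21 j x > 0" for j x unfolding r21_def using Q_pos[OF V1] Q_pos[OF V2] by simp
  have H': "r12 j x1 * r21 m x2 \<le> E" if "j < 3" "m < 3" for j m x1 x2
    using H that unfolding r12_def r21_def by blast
  have b1u: "beta b \<psi>1 \<psi>2 \<le> ereal (E / r21 m x2)" if "m < 3" for m x2
  proof (rule beta_upper[OF V1 V2], intro allI impI)
    fix x j assume "j < (3::nat)"
    then have "r12 j x * r21 m x2 \<le> E" using H' that by blast
    then show "Qf b \<psi>2 j x / Qf b \<psi>1 j x \<le> E / r21 m x2"
      using r21p[of m x2] unfolding r12_def[symmetric] by (simp add: pos_le_divide_eq)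
  qed
  have b1l: "ereal (r12 0 0) \<le> beta b \<psi>1 \<psi>2" unfolding r12_def by (rule beta_lower[OF V1 V2]) simp
  obtain u1 where u1: "beta b \<psi>1 \<psi>2 = ereal u1"
    using b1u[of 0 0] b1l by (cases "beta b \<psi>1 \<psi>2") auto
  have u1p: "u1 > 0" using b1l u1 r12p[of 0 0] by simp
  have b2u: "beta b \<psi>2 \<psi>1 \<le> ereal (E / u1)"
  proof (rule beta_upper[OF V2 V1], intro allI impI)
    fix x m assume m: "m < (3::nat)"
    have "u1 \<le> E / r21 m x" using b1u[OF m] u1 by simp
    then have "u1 * r21 m x \<le> E" using r21p[of m x] by (simp add: pos_le_divide_eq mult.commute)
    then show "Qf b \<psi>1 m x / Qf b \<psi>2 m x \<le> E / u1"
      using u1p unfolding r21_def[symmetric] by (simp add: pos_le_divide_eq mult.commute)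
  qed
  have b2l: "ereal (r21 0 0) \<le> beta b \<psi>2 \<psi>1" unfolding r21_def by (rule beta_lower[OF V2 V1]) simp
  obtain u2 where u2: "beta b \<psi>2 \<psi>1 = ereal u2"
    using b2u b2l by (cases "beta b \<psi>2 \<psi>1") auto
  have u2p: "u2 > 0" using b2l u2 r21p[of 0 0] by simp
  have "u2 \<le> E / u1" using b2u u2 by simp
  then have "u1 * u2 \<le> E" using u1p by (simp add: pos_le_divide_eq mult.commute)
  then have "ln (u1 * u2) \<le> ln E" using u1p u2p E by (subst ln_le_cancel_iff) auto
  then show ?thesis unfolding theta_def u1 u2 using u1p u2p by (simp add: ln_mult)
qed

lemma theta_ge:
  assumes V1: "\<psi>1 \<in> V b" and V2: "\<psi>2 \<in> V b" and T: "theta b \<psi>1 \<psi>2 \<le> ereal T"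
    and j: "j < 3" and m: "m < 3"
  shows "ln (Qf b \<psi>2 j x1 / Qf b \<psi>1 j x1) + ln (Qf b \<psi>1 m x2 / Qf b \<psi>2 m x2) \<le> T"
proof -
  define r12 where "r12 = Qf b \<psi>2 j x1 / Qf b \<psi>1 j x1"
  define r21 where "r21 = Qf b \<psi>1 m x2 / Qf b \<psi>2 m x2"
  have r12p: "r12 > 0" unfolding r12_def using Q_pos[OF V1] Q_pos[OF V2] by simp
  have r21p: "r21 > 0" unfolding r21_def using Q_pos[OF V1] Q_pos[OF V2] by simp
  have l1: "ereal r12 \<le> beta b \<psi>1 \<psi>2" unfolding r12_def by (rule beta_lower[OF V1 V2 j])
  have l2: "ereal r21 \<le> beta b \<psi>2 \<psi>1" unfolding r21_def by (rule beta_lower[OF V2 V1 m])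
  have nf: "beta b \<psi>1 \<psi>2 \<noteq> \<infinity>" "beta b \<psi>2 \<psi>1 \<noteq> \<infinity>" using T unfolding theta_def
    by (auto split: if_splits)
  obtain u1 where u1: "beta b \<psi>1 \<psi>2 = ereal u1" using nf l1 by (cases "beta b \<psi>1 \<psi>2") auto
  obtain u2 where u2: "beta b \<psi>2 \<psi>1 = ereal u2" using nf l2 by (cases "beta b \<psi>2 \<psi>1") auto
  have "ln u1 + ln u2 \<le> T" using T unfolding theta_def u1 u2 by simp
  moreover have "ln r12 \<le> ln u1" using l1 u1 r12p by simp
  moreover have "ln r21 \<le> ln u2" using l2 u2 r21p by simp
  ultimately show ?thesis unfolding r12_def r21_def by simp
qed

lemma deriv_le_bound:
  fixes g :: "real \<Rightarrow> real"
  assumes d: "DERIV g x0 :> D" and \<delta>: "\<delta> > 0"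
    and h: "\<forall>s. x0 < s \<and> s < x0 + \<delta> \<longrightarrow> g s - g x0 \<le> L * (s - x0)"
  shows "D \<le> L"
proof -
  have "((\<lambda>h. (g (x0 + h) - g x0) / h) \<longlongrightarrow> D) (at 0)" using d by (simp add: DERIV_def)
  then have lim: "((\<lambda>h. (g (x0 + h) - g x0) / h) \<longlongrightarrow> D) (at_right 0)"
    by (rule tendsto_mono[OF at_le, rotated]) auto
  have "eventually (\<lambda>h. h \<in> {0<..<\<delta>}) (at_right (0::real))" by (rule eventually_at_right_real[OF \<delta>])
  then have ev: "eventually (\<lambda>h. (g (x0 + h) - g x0) / h \<le> L) (at_right 0)"
  proof (rule eventually_mono)
    fix h assume "h \<in> {0<..<\<delta>}"
    then have "g (x0 + h) - g x0 \<le> L * h" "h > 0" using h[rule_format, of "x0 + h"] by auto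
    then show "(g (x0 + h) - g x0) / h \<le> L" by (simp add: pos_divide_le_eq)
  qed
  show ?thesis by (rule tendsto_upperbound[OF lim ev]) (simp add: trivial_limit_at_right_real)
qed

lemma deriv_abs_bound:
  fixes g g' :: "real \<Rightarrow> real"
  assumes d: "\<And>s. DERIV g s :> g' s" and b: "\<And>s. \<bar>g' s\<bar> \<le> L"
  shows "\<bar>g u - g v\<bar> \<le> L * \<bar>u - v\<bar>"
proof -
  have *: "\<bar>g q - g p\<bar> \<le> L * (q - p)" if "p < q" for p q
  proof -
    have "\<exists>z. p < z \<and> z < q \<and> g q - g p = (q - p) * g' z" by (rule MVT2[OF that]) (rule d)
    then obtain z where "g q - g p = (q - p) * g' z" by blast
    then have "\<bar>g q - g p\<bar> = (q - p) * \<bar>g' z\<bar>" using that by (simp add: abs_mult)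
    also have "\<dots> \<le> (q - p) * L" using b that by (intro mult_left_mono) auto
    finally show ?thesis by (simp add: mult.commute)
  qed
  consider "u < v" | "u = v" | "v < u" by linarith
  then show ?thesis
  proof cases
    case 1 then show ?thesis using *[OF 1] by (simp add: abs_minus_commute)
  next
    case 2 then show ?thesis by simp
  next
    case 3 then show ?thesis using *[OF 3] by simp
  qed
qed

lemma periodic_int:
  fixes g :: "real \<Rightarrow> 'a"
  assumes "\<forall>x. g (x + 1) = g x"
  shows "g (x + of_int n) = g x"
proof -
  have pos: "g (x + of_nat m) = g x" for x m
  proof (induction m)
    case 0 then show ?case by simp
  next
    case (Suc m)
    have "g (x + of_nat (Suc m)) = g ((x + of_nat m) + 1)" by (simp add: algebra_simps)
    also have "\<dots> = g (x + of_nat m)" using assms by blast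
    finally show ?case using Suc by simp
  qed
  show ?thesis
  proof (cases "n \<ge> 0")
    case True
    then show ?thesis using pos[of x "nat n"] by simp
  next
    case False
    then have "g (x + of_int n + of_nat (nat (- n))) = g (x + of_int n)" using pos by blast
    then show ?thesis using False by simp
  qed
qed

lemma periodic_bounded:
  fixes g :: "real \<Rightarrow> real"
  assumes c: "continuous_on UNIV g" and p: "\<forall>x. g (x + 1) = g x"
  shows "\<exists>M. \<forall>x. \<bar>g x\<bar> \<le> M"
proof -
  have "compact (g ` {0..1})" by (rule compact_continuous_image[OF continuous_on_subset[OF c]]) auto
  then obtain M where M: "\<forall>z\<in>g ` {0..1}. norm z \<le> M" using compact_imp_bounded bounded_iff by metis
  have "\<bar>g x\<bar> \<le> M" for x
  proof -
    have "g x = g (frac x + of_int (floor x))" by (simp add: frac_def)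
    also have "\<dots> = g (frac x)" by (rule periodic_int[OF p])
    finally show ?thesis using M frac_ge_0[of x] frac_lt_1[of x] by auto
  qed
  then show ?thesis by blast
qed

lemma ln_quot_eq:
  fixes A B D F c c' :: real
  assumes "A > 0" "B > 0" "D > 0" "F > 0" "c > 0" "c' > 0"
  shows "ln ((A / c') / (B / c)) + ln ((D / c) / (F / c')) = (ln A - ln F) - (ln B - ln D)"
  using assms by (simp add: ln_div ln_mult)

lemma torus_dist_small: "\<bar>u - v\<bar> < 1/2 \<Longrightarrow> torus_dist u v = \<bar>u - v\<bar>"
proof -
  assume a: "\<bar>u - v\<bar> < 1/2"
  have "-1/2 < u - v" "u - v < 1/2" using a by linarith+
  then have "\<lfloor>u - v + 1/2\<rfloor> = 0" by (simp add: floor_eq_iff)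
  then show ?thesis unfolding torus_dist_def round_def by simp
qed



definition qq :: "'n \<Rightarrow> real \<Rightarrow> (real^'n \<Rightarrow> real) \<Rightarrow> nat \<Rightarrow> real^'n \<Rightarrow> real" where
  "qq i b \<eta> j p = (if j = 0 then \<eta> p else if j = 1 then b * \<eta> p - partial i \<eta> p else b * \<eta> p + partial i \<eta> p)"

definition dq :: "'n \<Rightarrow> 'n \<Rightarrow> real \<Rightarrow> (real^'n \<Rightarrow> real) \<Rightarrow> nat \<Rightarrow> real^'n \<Rightarrow> real" where
  "dq i k b \<eta> j p = (if j = 0 then partial k \<eta> p else if j = 1 then b * partial k \<eta> p - partial k (partial i \<eta>) p
     else b * partial k \<eta> p + partial k (partial i \<eta>) p)"

lemma ratios_set: "set (ratios i k b \<eta> p) =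
  {dq i k b \<eta> 0 p / qq i b \<eta> 0 p, dq i k b \<eta> 1 p / qq i b \<eta> 1 p, dq i k b \<eta> 2 p / qq i b \<eta> 2 p}"
  unfolding ratios_def qq_def dq_def by simp

lemma Max_ratios_ge: "j < 3 \<Longrightarrow> dq i k b \<eta> j p / qq i b \<eta> j p \<le> Max (set (ratios i k b \<eta> p))"
proof -
  assume "j < 3"
  then have "j = 0 \<or> j = 1 \<or> j = 2" by auto
  then show ?thesis unfolding ratios_set by auto
qed

lemma Min_ratios_le: "j < 3 \<Longrightarrow> Min (set (ratios i k b \<eta> p)) \<le> dq i k b \<eta> j p / qq i b \<eta> j p"
proof -
  assume "j < 3"
  then have "j = 0 \<or> j = 1 \<or> j = 2" by auto
  then show ?thesis unfolding ratios_set by auto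
qed

lemma ex_less_3: "(\<exists>j<(3::nat). P j) \<longleftrightarrow> P 0 \<or> P 1 \<or> P 2"
  by (auto simp: eval_nat_numeral less_Suc_eq)

lemma Max_ratios_ex: "\<exists>j<3. Max (set (ratios i k b \<eta> p)) = dq i k b \<eta> j p / qq i b \<eta> j p"
proof -
  have "Max (set (ratios i k b \<eta> p)) \<in> set (ratios i k b \<eta> p)" by (intro Max_in) (auto simp: ratios_def)
  then show ?thesis unfolding ex_less_3 ratios_set by simp
qed

lemma Min_ratios_ex: "\<exists>j<3. Min (set (ratios i k b \<eta> p)) = dq i k b \<eta> j p / qq i b \<eta> j p"
proof -
  have "Min (set (ratios i k b \<eta> p)) \<in> set (ratios i k b \<eta> p)" by (intro Min_in) (auto simp: ratios_def)
  then show ?thesis unfolding ex_less_3 ratios_set by simp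
qed

lemma sect_DERIV:
  fixes f :: "real^'n \<Rightarrow> real"
  assumes "\<forall>x. sect f x l differentiable at (x $ l)"
  shows "DERIV (\<lambda>s. f (upd p l s)) s :> partial l f (upd p l s)"
proof -
  have "sect f (upd p l s) l differentiable at s" using assms[rule_format, of "upd p l s"] by simp
  then have "DERIV (sect f p l) s :> deriv (sect f p l) s" by (simp add: DERIV_deriv_iff_real_differentiable)
  moreover have "(\<lambda>s. f (upd p l s)) = sect f p l" by (simp add: sect_def)
  moreover have "partial l f (upd p l s) = deriv (sect f p l) s" by (simp add: partial_def)
  ultimately show ?thesis by simp
qed

lemma C2_N_facts:
  assumes "C2_N \<eta>"
  shows "\<forall>x. sect \<eta> x l differentiable at (x $ l)"
    and "\<forall>x. sect (partial j \<eta>) x l differentiable at (x $ l)"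
    and "continuous_on UNIV \<eta>"
    and "continuous_on UNIV (partial j \<eta>)"
    and "continuous_on UNIV (partial l (partial j \<eta>))"
  using assms unfolding C2_N_def by auto

lemma qq_DERIV:
  assumes "C2_N \<eta>"
  shows "DERIV (\<lambda>s. qq i b \<eta> j (upd p k s)) s :> dq i k b \<eta> j (upd p k s)"
proof -
  have e0: "DERIV (\<lambda>s. \<eta> (upd p k s)) s :> partial k \<eta> (upd p k s)"
    by (rule sect_DERIV) (use C2_N_facts(1)[OF assms] in blast)
  have e1: "DERIV (\<lambda>s. partial i \<eta> (upd p k s)) s :> partial k (partial i \<eta>) (upd p k s)"
    by (rule sect_DERIV) (use C2_N_facts(2)[OF assms] in blast)
  show ?thesis
  proof (cases "j = 0")
    case True then show ?thesis unfolding qq_def dq_def using e0 by simp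
  next
    case False
    show ?thesis
    proof (cases "j = 1")
      case True then show ?thesis unfolding qq_def dq_def using DERIV_diff[OF DERIV_cmult[OF e0, of b] e1] by simp
    next
      case False2: False
      then show ?thesis unfolding qq_def dq_def using False DERIV_add[OF DERIV_cmult[OF e0, of b] e1] by simp
    qed
  qed
qed

lemma lnqq_DERIV:
  assumes "C2_N \<eta>" "qq i b \<eta> j (upd p k s) > 0"
  shows "DERIV (\<lambda>s. ln (qq i b \<eta> j (upd p k s))) s :> dq i k b \<eta> j (upd p k s) / qq i b \<eta> j (upd p k s)"
  using DERIV_chain2[OF DERIV_ln[OF assms(2)] qq_DERIV[OF assms(1)]] by (simp add: divide_inverse mult.commute)

lemma qq_pos:
  assumes "\<forall>y. sect \<eta> y i \<in> V b"
  shows "qq i b \<eta> j p > 0"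
proof -
  have "Qf b (sect \<eta> p i) j (p $ i) > 0" using Q_pos assms by blast
  moreover have "Qf b (sect \<eta> p i) j (p $ i) = qq i b \<eta> j p"
    unfolding Qf_def qq_def partial_def by (simp add: sect_def)
  ultimately show ?thesis by simp
qed

lemma cd_Qf:
  assumes "C2_N \<eta>"
  shows "Qf b (cond_density \<eta> i y) j x = qq i b \<eta> j (upd y i x) / integral {0..1} (\<lambda>s. \<eta> (upd y i s))"
proof -
  define C where "C = integral {0..1} (\<lambda>s. \<eta> (upd y i s))"
  have "DERIV (\<lambda>x. \<eta> (upd y i x) / C) x :> partial i \<eta> (upd y i x) / C"
    by (rule DERIV_cdivide[OF sect_DERIV[OF C2_N_facts(1)[OF assms]]])
  then have "deriv (cond_density \<eta> i y) x = partial i \<eta> (upd y i x) / C"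
    unfolding cond_density_def C_def[symmetric] by (rule DERIV_imp_deriv)
  then show ?thesis unfolding Qf_def qq_def C_def[symmetric]
    by (simp add: cond_density_def C_def[symmetric] diff_divide_distrib add_divide_distrib)
qed

definition per_in :: "'n \<Rightarrow> (real^'n \<Rightarrow> real) \<Rightarrow> bool" where
  "per_in i g \<longleftrightarrow> (\<forall>p s. g (upd p i (s + 1)) = g (upd p i s))"

lemma per_eta: "periodicN \<eta> \<Longrightarrow> per_in i \<eta>"
  unfolding per_in_def periodicN_def
proof (intro allI)
  fix p s assume "\<forall>x j. \<eta> (upd x j (x $ j + 1)) = \<eta> x"
  from this[rule_format, of "upd p i s" i] show "\<eta> (upd p i (s + 1)) = \<eta> (upd p i s)" by simp
qed

lemma per_partial_same:
  assumes "per_in i \<eta>" "\<forall>x. sect \<eta> x i differentiable at (x $ i)"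
  shows "per_in i (partial i \<eta>)"
  unfolding per_in_def
proof (intro allI)
  fix p s
  define f where "f = (\<lambda>s. \<eta> (upd p i s))"
  have fp: "(\<lambda>x. f (x + 1)) = f" using assms(1) unfolding per_in_def f_def by auto
  have d: "DERIV f t :> partial i \<eta> (upd p i t)" for t unfolding f_def by (rule sect_DERIV[OF assms(2)])
  have "DERIV (\<lambda>x. f (x + 1)) s :> partial i \<eta> (upd p i (s + 1))"
    using d[of "s + 1"] DERIV_shift by blast
  then have "DERIV f s :> partial i \<eta> (upd p i (s + 1))" using fp by simp
  then show "partial i \<eta> (upd p i (s + 1)) = partial i \<eta> (upd p i s)" using d[of s] DERIV_unique by blast
qed

lemma per_partial_other:
  assumes "per_in i g" "k \<noteq> i"
  shows "per_in i (partial k g)"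
  unfolding per_in_def
proof (intro allI)
  fix p s
  have "sect g (upd p i (s + 1)) k = sect g (upd p i s) k"
  proof
    fix u
    have "g (upd (upd p i (s + 1)) k u) = g (upd (upd p k u) i (s + 1))" using assms(2) by (simp add: upd_commute)
    also have "\<dots> = g (upd (upd p k u) i s)" using assms(1) unfolding per_in_def by blast
    also have "\<dots> = g (upd (upd p i s) k u)" using assms(2) by (simp add: upd_commute)
    finally show "sect g (upd p i (s + 1)) k u = sect g (upd p i s) k u" by (simp add: sect_def)
  qed
  then show "partial k g (upd p i (s + 1)) = partial k g (upd p i s)"
    unfolding partial_def using assms(2) by simp
qed

lemma integral_pos:
  assumes "C2_TN_pos \<eta>"
  shows "integral {0..1} (\<lambda>s. \<eta> (upd y i s)) > 0"
proof -
  have c: "continuous_on UNIV (\<lambda>s. \<eta> (upd y i s))"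
    using assms unfolding C2_TN_pos_def C2_N_def
    by (intro continuous_on_compose2[OF _ continuous_upd]) auto
  obtain s0 where s0: "\<forall>s\<in>{0..1}. \<eta> (upd y i s0) \<le> \<eta> (upd y i s)"
    using continuous_attains_inf[OF compact_Icc _ continuous_on_subset[OF c], of 0 1] by auto
  have ic: "(\<lambda>s. \<eta> (upd y i s)) integrable_on {0..1}"
    by (rule integrable_continuous_interval[OF continuous_on_subset[OF c]]) simp
  have ic0: "(\<lambda>s::real. \<eta> (upd y i s0)) integrable_on {0..1}"
    using integrable_const[where a="0::real" and b=1] by (simp add: cbox_interval)
  have "integral {0..1} (\<lambda>s::real. \<eta> (upd y i s0)) \<le> integral {0..1} (\<lambda>s. \<eta> (upd y i s))"
    by (rule integral_le[OF ic0 ic]) (use s0 in auto)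
  moreover have "\<eta> (upd y i s0) > 0" using assms unfolding C2_TN_pos_def by auto
  ultimately show ?thesis by simp
qed

lemma rat_bound:
  fixes \<eta> :: "real^'n \<Rightarrow> real"
  assumes C: "C2_TN_pos \<eta>" and HV: "\<forall>y. sect \<eta> y i \<in> V b" and ki: "k \<noteq> i"
  shows "\<exists>M. \<forall>x j. j < 3 \<longrightarrow> \<bar>dq i k b \<eta> j (upd y i x) / qq i b \<eta> j (upd y i x)\<bar> \<le> M"
proof -
  have C2: "C2_N \<eta>" and pN: "periodicN \<eta>" using C unfolding C2_TN_pos_def by auto
  have qpos: "qq i b \<eta> j p > 0" for j p using qq_pos[OF HV] .
  have cf: "continuous_on UNIV (\<lambda>x. f (upd y i x))" if "continuous_on UNIV f" for f :: "real^'n \<Rightarrow> real"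
    by (rule continuous_on_compose2[OF that continuous_upd]) auto
  have c0: "continuous_on UNIV (\<lambda>x. \<eta> (upd y i x))" by (rule cf[OF C2_N_facts(3)[OF C2]])
  have c1: "continuous_on UNIV (\<lambda>x. partial i \<eta> (upd y i x))" by (rule cf[OF C2_N_facts(4)[OF C2]])
  have c2: "continuous_on UNIV (\<lambda>x. partial k \<eta> (upd y i x))" by (rule cf[OF C2_N_facts(4)[OF C2]])
  have c3: "continuous_on UNIV (\<lambda>x. partial k (partial i \<eta>) (upd y i x))" by (rule cf[OF C2_N_facts(5)[OF C2]])
  have cq: "continuous_on UNIV (\<lambda>x. qq i b \<eta> j (upd y i x))" for j
  proof -
    have "continuous_on UNIV (\<lambda>x. b * \<eta> (upd y i x) - partial i \<eta> (upd y i x))"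
      by (rule continuous_on_diff[OF continuous_on_mult[OF continuous_on_const c0] c1])
    moreover have "continuous_on UNIV (\<lambda>x. b * \<eta> (upd y i x) + partial i \<eta> (upd y i x))"
      by (rule continuous_on_add[OF continuous_on_mult[OF continuous_on_const c0] c1])
    ultimately show ?thesis using c0 unfolding qq_def by (cases "j = 0"; cases "j = 1") simp_all
  qed
  have cd: "continuous_on UNIV (\<lambda>x. dq i k b \<eta> j (upd y i x))" for j
  proof -
    have "continuous_on UNIV (\<lambda>x. b * partial k \<eta> (upd y i x) - partial k (partial i \<eta>) (upd y i x))"
      by (rule continuous_on_diff[OF continuous_on_mult[OF continuous_on_const c2] c3])
    moreover have "continuous_on UNIV (\<lambda>x. b * partial k \<eta> (upd y i x) + partial k (partial i \<eta>) (upd y i x))"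
      by (rule continuous_on_add[OF continuous_on_mult[OF continuous_on_const c2] c3])
    ultimately show ?thesis using c2 unfolding dq_def by (cases "j = 0"; cases "j = 1") simp_all
  qed
  define r where "r j x = dq i k b \<eta> j (upd y i x) / qq i b \<eta> j (upd y i x)" for j x
  have cr: "continuous_on UNIV (r j)" for j
    unfolding r_def by (rule continuous_on_divide[OF cd cq]) (use qpos in \<open>simp add: less_imp_neq[symmetric]\<close>)
  define h where "h x = \<bar>r 0 x\<bar> + \<bar>r 1 x\<bar> + \<bar>r 2 x\<bar>" for x
  have ch: "continuous_on UNIV h" unfolding h_def
    by (intro continuous_intros cr)
  have pe: "per_in i \<eta>" by (rule per_eta[OF pN])
  have pPi: "per_in i (partial i \<eta>)" by (rule per_partial_same[OF pe C2_N_facts(1)[OF C2]])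
  have pPk: "per_in i (partial k \<eta>)" by (rule per_partial_other[OF pe ki])
  have pPki: "per_in i (partial k (partial i \<eta>))" by (rule per_partial_other[OF pPi ki])
  have rp: "r j (x + 1) = r j x" for j x
    using pe pPi pPk pPki unfolding r_def qq_def dq_def per_in_def by simp
  have "\<forall>x. h (x + 1) = h x" unfolding h_def using rp by simp
  then obtain M where M: "\<forall>x. \<bar>h x\<bar> \<le> M" using periodic_bounded[OF ch] by blast
  have "\<bar>r j x\<bar> \<le> M" if "j < 3" for j x
  proof -
    have "\<bar>r j x\<bar> \<le> h x" using that unfolding h_def
      by (cases "j = 0"; cases "j = 1") (auto simp: eval_nat_numeral less_Suc_eq)
    then show ?thesis using M by (smt (verit))
  qed
  then show ?thesis unfolding r_def by blast
qed

lemma ln_mult_pos: "(u::real) > 0 \<Longrightarrow> v > 0 \<Longrightarrow> ln (u * v) = ln u + ln v"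
  by (simp add: ln_mult)

theorem propositionC1:
  fixes \<eta> :: "real^'n \<Rightarrow> real" and a b L :: real and i k :: 'n
  assumes "C2_TN_pos \<eta>" and "0 \<le> a" and "a \<le> b" and "0 \<le> L" and "k \<noteq> i"
  shows "in_M i k a b L \<eta> \<longleftrightarrow>
           (\<forall>y. sect \<eta> y i \<in> V a) \<and>
           (\<forall>y. A_fun i k \<eta> b y - B_fun i k \<eta> b y \<le> L)"
proof -
  have C2: "C2_N \<eta>" and perN: "periodicN \<eta>" and pos: "\<forall>x. \<eta> x > 0"
    using assms(1) unfolding C2_TN_pos_def by auto
  have ki: "k \<noteq> i" by (rule assms(5))
  define C where "C y = integral {0..1} (\<lambda>s. \<eta> (upd y i s))" for y
  have cdC: "cond_density \<eta> i y = (\<lambda>x. \<eta> (upd y i x) / C y)" for y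
    by (simp add: cond_density_def C_def)
  have Qcd: "Qf b (cond_density \<eta> i y) j x = qq i b \<eta> j (upd y i x) / C y" for y j x
    using cd_Qf[OF C2] unfolding C_def by simp
  have e1: "upd (upd y k s) i x = upd (upd y i x) k s" for y s x using ki by (simp add: upd_commute)
  have e3: "upd (upd y i x) k (y $ k) = upd y i x" for y x
    using upd_triv[of "upd y i x" k] ki by simp
  have key: "ln (Qf b (cond_density \<eta> i (upd y k s)) j x1 / Qf b (cond_density \<eta> i y) j x1)
           + ln (Qf b (cond_density \<eta> i y) m x2 / Qf b (cond_density \<eta> i (upd y k s)) m x2)
           = (ln (qq i b \<eta> j (upd (upd y i x1) k s)) - ln (qq i b \<eta> m (upd (upd y i x2) k s)))
             - (ln (qq i b \<eta> j (upd (upd y i x1) k (y $ k))) - ln (qq i b \<eta> m (upd (upd y i x2) k (y $ k))))"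
    if qpos: "\<forall>j p. qq i b \<eta> j p > 0" and cpos: "\<forall>y. C y > 0" for y s x1 x2 j m
    unfolding Qcd e1 e3 by (rule ln_quot_eq) (use qpos cpos in auto)
  have gD: "DERIV (\<lambda>s. ln (qq i b \<eta> j (upd (upd y i x1) k s)) - ln (qq i b \<eta> m (upd (upd y i x2) k s))) s :>
      dq i k b \<eta> j (upd (upd y k s) i x1) / qq i b \<eta> j (upd (upd y k s) i x1)
      - dq i k b \<eta> m (upd (upd y k s) i x2) / qq i b \<eta> m (upd (upd y k s) i x2)"
    if qpos: "\<forall>j p. qq i b \<eta> j p > 0" for y x1 x2 j m s
    unfolding e1 using qpos by (intro DERIV_diff lnqq_DERIV[OF C2]) auto
  show ?thesis
  proof
    assume M: "in_M i k a b L \<eta>"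
    have CD: "\<forall>y. cond_density \<eta> i y \<in> V a"
      and TH: "\<forall>y t. theta b (cond_density \<eta> i y) (cond_density \<eta> i (upd y k t))
                \<le> ereal (L * torus_dist (y $ k) t)"
      using M unfolding in_M_def by auto
    have cpos: "\<forall>y. C y > 0"
    proof
      fix y
      have "cond_density \<eta> i y 0 > 0" using CD unfolding V_def C2_T_pos_def by auto
      then have "\<eta> (upd y i 0) / C y > 0" using cdC by simp
      then show "C y > 0" using pos[rule_format, of "upd y i 0"] by (auto simp: zero_less_divide_iff)
    qed
    have HV: "\<forall>y. sect \<eta> y i \<in> V a"
    proof
      fix y
      have "sect \<eta> y i = (\<lambda>x. C y * cond_density \<eta> i y x)"
        using cpos[rule_format, of y] unfolding cdC sect_def by (simp add: fun_eq_iff)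
      then show "sect \<eta> y i \<in> V a" using V_scale[OF CD[rule_format] cpos[rule_format]] by simp
    qed
    have HVb: "\<forall>y. sect \<eta> y i \<in> V b" using HV V_mono[OF assms(3)] by blast
    have CDb: "\<forall>y. cond_density \<eta> i y \<in> V b" using CD V_mono[OF assms(3)] by blast
    have qpos: "\<forall>j p. qq i b \<eta> j p > 0" using qq_pos[OF HVb] by blast
    have AB: "A_fun i k \<eta> b y - B_fun i k \<eta> b y \<le> L" for y
    proof -
      have core: "dq i k b \<eta> j (upd y i x1) / qq i b \<eta> j (upd y i x1)
          - dq i k b \<eta> m (upd y i x2) / qq i b \<eta> m (upd y i x2) \<le> L"
        if j: "j < 3" and m: "m < 3" for x1 x2 j m
      proof -
        define g where "g s = ln (qq i b \<eta> j (upd (upd y i x1) k s)) - ln (qq i b \<eta> m (upd (upd y i x2) k s))" for s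
        have d: "DERIV g (y $ k) :> dq i k b \<eta> j (upd y i x1) / qq i b \<eta> j (upd y i x1)
          - dq i k b \<eta> m (upd y i x2) / qq i b \<eta> m (upd y i x2)"
          using gD[OF qpos, of j y x1 m x2 "y $ k"] unfolding g_def by simp
        show ?thesis
        proof (rule deriv_le_bound[OF d, of "1/2"], simp, intro allI impI)
          fix s assume s: "y $ k < s \<and> s < y $ k + 1/2"
          have td: "torus_dist (y $ k) s = s - y $ k" using s torus_dist_small[of "y $ k" s] by simp
          have "theta b (cond_density \<eta> i y) (cond_density \<eta> i (upd y k s)) \<le> ereal (L * (s - y $ k))"
            using TH td by metis
          from theta_ge[OF CDb[rule_format] CDb[rule_format] this j m, of x1 x2]
          show "g s - g (y $ k) \<le> L * (s - y $ k)"
            unfolding key[OF qpos cpos] g_def by simp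
        qed
      qed
      have mm: "Max (set (ratios i k b \<eta> (upd y i x1))) \<le> L + Min (set (ratios i k b \<eta> (upd y i x2)))" for x1 x2
      proof -
        obtain j where j: "j < 3" "Max (set (ratios i k b \<eta> (upd y i x1))) = dq i k b \<eta> j (upd y i x1) / qq i b \<eta> j (upd y i x1)"
          using Max_ratios_ex by blast
        obtain m where m: "m < 3" "Min (set (ratios i k b \<eta> (upd y i x2))) = dq i k b \<eta> m (upd y i x2) / qq i b \<eta> m (upd y i x2)"
          using Min_ratios_ex by blast
        show ?thesis using core[OF j(1) m(1), of x1 x2] j(2) m(2) by simp
      qed
      have "Max (set (ratios i k b \<eta> (upd y i x1))) - L \<le> B_fun i k \<eta> b y" for x1
        unfolding B_fun_def by (rule cINF_greatest) (use mm in \<open>auto simp: algebra_simps\<close>)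
      then have "A_fun i k \<eta> b y \<le> L + B_fun i k \<eta> b y"
        unfolding A_fun_def by (intro cSUP_least) (auto simp: algebra_simps)
      then show ?thesis by simp
    qed
    show "(\<forall>y. sect \<eta> y i \<in> V a) \<and> (\<forall>y. A_fun i k \<eta> b y - B_fun i k \<eta> b y \<le> L)"
      using HV AB by blast
  next
    assume "(\<forall>y. sect \<eta> y i \<in> V a) \<and> (\<forall>y. A_fun i k \<eta> b y - B_fun i k \<eta> b y \<le> L)"
    then have HV: "\<forall>y. sect \<eta> y i \<in> V a" and AB: "\<forall>y. A_fun i k \<eta> b y - B_fun i k \<eta> b y \<le> L" by auto
    have HVb: "\<forall>y. sect \<eta> y i \<in> V b" using HV V_mono[OF assms(3)] by blast
    have qpos: "\<forall>j p. qq i b \<eta> j p > 0" using qq_pos[OF HVb] by blast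
    have cpos: "\<forall>y. C y > 0" unfolding C_def using integral_pos[OF assms(1)] by blast
    have CD: "\<forall>y. cond_density \<eta> i y \<in> V a"
    proof
      fix y
      have "cond_density \<eta> i y = (\<lambda>x. inverse (C y) * sect \<eta> y i x)"
        unfolding cdC sect_def by (auto simp: fun_eq_iff divide_inverse mult.commute)
      then show "cond_density \<eta> i y \<in> V a"
        using V_scale[OF HV[rule_format], of "inverse (C y)"] cpos by simp
    qed
    have CDb: "\<forall>y. cond_density \<eta> i y \<in> V b" using CD V_mono[OF assms(3)] by blast
    have Aub: "dq i k b \<eta> j (upd y i x) / qq i b \<eta> j (upd y i x) \<le> A_fun i k \<eta> b y"
      and Blb: "B_fun i k \<eta> b y \<le> dq i k b \<eta> j (upd y i x) / qq i b \<eta> j (upd y i x)"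
      if j: "j < 3" for y x j
    proof -
      obtain M where M: "\<forall>x j. j < 3 \<longrightarrow> \<bar>dq i k b \<eta> j (upd y i x) / qq i b \<eta> j (upd y i x)\<bar> \<le> M"
        using rat_bound[OF assms(1) HVb ki] by blast
      have bM: "Max (set (ratios i k b \<eta> (upd y i x))) \<le> M" for x
      proof -
        obtain j where "j < 3" "Max (set (ratios i k b \<eta> (upd y i x))) = dq i k b \<eta> j (upd y i x) / qq i b \<eta> j (upd y i x)"
          using Max_ratios_ex by blast
        then show ?thesis using M by (smt (verit))
      qed
      have bm: "- M \<le> Min (set (ratios i k b \<eta> (upd y i x)))" for x
      proof -
        obtain j where "j < 3" "Min (set (ratios i k b \<eta> (upd y i x))) = dq i k b \<eta> j (upd y i x) / qq i b \<eta> j (upd y i x)"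
          using Min_ratios_ex by blast
        then show ?thesis using M by (smt (verit))
      qed
      have "Max (set (ratios i k b \<eta> (upd y i x))) \<le> A_fun i k \<eta> b y"
        unfolding A_fun_def by (rule cSUP_upper) (auto intro!: bdd_aboveI2[where M=M] bM)
      then show "dq i k b \<eta> j (upd y i x) / qq i b \<eta> j (upd y i x) \<le> A_fun i k \<eta> b y"
        using Max_ratios_ge[OF j] order_trans by blast
      have "B_fun i k \<eta> b y \<le> Min (set (ratios i k b \<eta> (upd y i x)))"
        unfolding B_fun_def by (rule cINF_lower) (auto intro!: bdd_belowI2[where m="-M"] bm)
      then show "B_fun i k \<eta> b y \<le> dq i k b \<eta> j (upd y i x) / qq i b \<eta> j (upd y i x)"
        using Min_ratios_le[OF j] order_trans by blast
    qed
    have TH: "theta b (cond_density \<eta> i y) (cond_density \<eta> i (upd y k t)) \<le> ereal (L * torus_dist (y $ k) t)" for y t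
    proof -
      define n where "n = round (y $ k - t)"
      define t' where "t' = t + of_int n"
      have per1: "cond_density \<eta> i (upd y k (v + 1)) = cond_density \<eta> i (upd y k v)" for v
      proof -
        have pk: "per_in k \<eta>" by (rule per_eta[OF perN])
        have "\<eta> (upd (upd y k (v + 1)) i x) = \<eta> (upd (upd y k v) i x)" for x
          using pk unfolding e1 per_in_def by blast
        then show ?thesis unfolding cond_density_def by simp
      qed
      have "cond_density \<eta> i (upd y k t') = cond_density \<eta> i (upd y k t)"
        unfolding t'_def by (rule periodic_int[of "\<lambda>v. cond_density \<eta> i (upd y k v)", OF allI[OF per1]])
      moreover have "torus_dist (y $ k) t = \<bar>t' - y $ k\<bar>"
        unfolding torus_dist_def t'_def n_def by simp
      moreover have "theta b (cond_density \<eta> i y) (cond_density \<eta> i (upd y k t')) \<le> ereal (L * \<bar>t' - y $ k\<bar>)"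
      proof -
        have "theta b (cond_density \<eta> i y) (cond_density \<eta> i (upd y k t')) \<le> ereal (ln (exp (L * \<bar>t' - y $ k\<bar>)))"
        proof (rule theta_le[OF CDb[rule_format] CDb[rule_format]], simp, intro allI impI)
          fix x1 x2 j m assume j: "j < (3::nat)" and m: "m < (3::nat)"
          define g where "g s = ln (qq i b \<eta> j (upd (upd y i x1) k s)) - ln (qq i b \<eta> m (upd (upd y i x2) k s))" for s
          define g' where "g' s = dq i k b \<eta> j (upd (upd y k s) i x1) / qq i b \<eta> j (upd (upd y k s) i x1)
            - dq i k b \<eta> m (upd (upd y k s) i x2) / qq i b \<eta> m (upd (upd y k s) i x2)" for s
          have d: "DERIV g s :> g' s" for s unfolding g_def g'_def by (rule gD[OF qpos])
          have bnd: "\<bar>g' s\<bar> \<le> L" for s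
          proof -
            have "A_fun i k \<eta> b (upd y k s) - B_fun i k \<eta> b (upd y k s) \<le> L" using AB by blast
            then show ?thesis unfolding g'_def
              using Aub[OF j, of "upd y k s" x1] Blb[OF j, of "upd y k s" x1]
                Aub[OF m, of "upd y k s" x2] Blb[OF m, of "upd y k s" x2] by (smt (verit))
          qed
          have gb: "g t' - g (y $ k) \<le> L * \<bar>t' - y $ k\<bar>"
            using deriv_abs_bound[OF d bnd, of t' "y $ k"] by simp
          define P where "P = (Qf b (cond_density \<eta> i (upd y k t')) j x1 / Qf b (cond_density \<eta> i y) j x1) *
               (Qf b (cond_density \<eta> i y) m x2 / Qf b (cond_density \<eta> i (upd y k t')) m x2)"
          have Pp: "P > 0" unfolding P_def using Q_pos CDb by (simp add: mult_pos_pos)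
          have r1p: "Qf b (cond_density \<eta> i (upd y k t')) j x1 / Qf b (cond_density \<eta> i y) j x1 > 0"
            using Q_pos CDb by simp
          have r2p: "Qf b (cond_density \<eta> i y) m x2 / Qf b (cond_density \<eta> i (upd y k t')) m x2 > 0"
            using Q_pos CDb by simp
          have "ln P = ln (Qf b (cond_density \<eta> i (upd y k t')) j x1 / Qf b (cond_density \<eta> i y) j x1)
             + ln (Qf b (cond_density \<eta> i y) m x2 / Qf b (cond_density \<eta> i (upd y k t')) m x2)"
            unfolding P_def by (rule ln_mult_pos[OF r1p r2p])
          also have "\<dots> = g t' - g (y $ k)" unfolding g_def by (rule key[OF qpos cpos])
          finally have "ln P = g t' - g (y $ k)" .
          then have "ln P \<le> L * \<bar>t' - y $ k\<bar>" using gb by simp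
          then have "P \<le> exp (L * \<bar>t' - y $ k\<bar>)" using Pp by (metis exp_le_cancel_iff exp_ln)
          then show "Qf b (cond_density \<eta> i (upd y k t')) j x1 / Qf b (cond_density \<eta> i y) j x1 *
               (Qf b (cond_density \<eta> i y) m x2 / Qf b (cond_density \<eta> i (upd y k t')) m x2)
               \<le> exp (L * \<bar>t' - y $ k\<bar>)" unfolding P_def .
        qed
        then show ?thesis by simp
      qed
      ultimately show ?thesis by simp
    qed
    show "in_M i k a b L \<eta>" unfolding in_M_def using assms(1) CD TH by blast
  qed
qed

end
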